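(* Let $N\ge1$, $S_1,\dots,S_N\ge1$, and consider an $S_1\times\cdots\times S_N$-setting $N$-partite correlation experiment with joint distributions $P_s$ on $\Lambda_1^{(s_1)}\times\cdots\times\Lambda_N^{(s_N)}$ for $s=(s_1,\dots,s_N)$, admitting an LHV model. Then for any real coefficients $\gamma_s^{(q_s)}$ and any events $D_s^{(q_s)}\subseteq\Lambda_1^{(s_1)}\times\cdots\times\Lambda_N^{(s_N)}$, $q_s=1,\dots,Q_s$, observed under the joint measurement $s$, the tight linear LHV constraint $$\inf_{\lambda_1\in\Lambda_1,\dots,\lambda_N\in\Lambda_N}\sum_{q_s,\,s}\gamma_s^{(q_s)}\chi_{D_s^{(q_s)}}(\lambda_1^{(s_1)},\dots,\lambda_N^{(s_N)})\le\sum_{q_s,\,s}\gamma_s^{(q_s)}P_s(D_s^{(q_s)})\le\sup_{\lambda_1\in\Lambda_1,\dots,\lambda_N\in\Lambda_N}\sum_{q_s,\,s}\gamma_s^{(q_s)}\chi_{D_s^{(q_s)}}(\lambda_1^{(s_1)},\dots,\lambda_N^{(s_N)})$$ holds, where $\lambda_n=(\lambda_n^{(1)},\dots,\lambda_n^{(S_n)})$ and $\Lambda_n=\Lambda_n^{(1)}\times\cdots\times\Lambda_n^{(S_n)}$.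
   Context: Party $n$ performs measurements $s_n\in\{1,\dots,S_n\}$ with outcomes in a measurable space $\Lambda_n^{(s_n)}$. $\chi_D$ is the indicator function of $D$. The sum runs over all joint settings $s$ and all $q_s=1,\dots,Q_s$. The experiment admitting an LHV model is characterized by the existence of a probability measure on $\Lambda_1\times\cdots\times\Lambda_N$ having every $P_s$ as the marginal on coordinates $(\lambda_1^{(s_1)},\dots,\lambda_N^{(s_N)})$. A linear LHV constraint is tight if, within the class of experiments with the given outcome sets admitting an LHV model, its bounds cannot be improved. *)

theory Defs
  imports "HOL-Probability.Probability"
begin

text \<open>Parties are indexed by n < N, settings of party n by k < S n
  (0-based). The outcome space of party n under setting k is the measurable
  space Lam n k.\<close>

definition settings :: "nat \<Rightarrow> (nat \<Rightarrow> nat) \<Rightarrow> (nat \<Rightarrow> nat) set" where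
  "settings N S = PiE {..<N} (\<lambda>n. {..<S n})"

definition joint_space :: "nat \<Rightarrow> (nat \<Rightarrow> nat \<Rightarrow> 'a measure) \<Rightarrow> (nat \<Rightarrow> nat)
    \<Rightarrow> (nat \<Rightarrow> 'a) measure" where
  "joint_space N Lam s = PiM {..<N} (\<lambda>n. Lam n (s n))"

definition hidden_space :: "nat \<Rightarrow> (nat \<Rightarrow> nat) \<Rightarrow> (nat \<Rightarrow> nat \<Rightarrow> 'a measure)
    \<Rightarrow> (nat \<Rightarrow> nat \<Rightarrow> 'a) measure" where
  "hidden_space N S Lam = PiM {..<N} (\<lambda>n. PiM {..<S n} (\<lambda>k. Lam n k))"

definition obs :: "nat \<Rightarrow> (nat \<Rightarrow> nat) \<Rightarrow> (nat \<Rightarrow> nat \<Rightarrow> 'a) \<Rightarrow> (nat \<Rightarrow> 'a)" where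
  "obs N s l = (\<lambda>n\<in>{..<N}. l n (s n))"

definition corr_experiment where
  "corr_experiment N S Lam P \<longleftrightarrow>
     (\<forall>s\<in>settings N S. prob_space (P s) \<and> sets (P s) = sets (joint_space N Lam s))"

definition admits_LHV where
  "admits_LHV N S Lam P \<longleftrightarrow> corr_experiment N S Lam P \<and>
     (\<exists>\<mu>. prob_space \<mu> \<and> sets \<mu> = sets (hidden_space N S Lam) \<and>
        (\<forall>s\<in>settings N S. P s = distr \<mu> (joint_space N Lam s) (obs N s)))"

definition lin_value where
  "lin_value N S Q \<gamma> D P =
     (\<Sum>s\<in>settings N S. \<Sum>q<Q s. \<gamma> s q * measure (P s) (D s q))"

definition lin_fun where
  "lin_fun N S Q \<gamma> D l =
     (\<Sum>s\<in>settings N S. \<Sum>q<Q s. \<gamma> s q * indicator (D s q) (obs N s l))"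

end

theory Submission
  imports Defs
begin

lemma obs_meas:
  assumes "s \<in> settings N S"
  shows "obs N s \<in> hidden_space N S Lam \<rightarrow>\<^sub>M joint_space N Lam s"
proof -
  have "(\<lambda>l. l n (s n)) \<in> hidden_space N S Lam \<rightarrow>\<^sub>M Lam n (s n)" if n: "n < N" for n
  proof -
    have sn: "s n < S n" using assms n by (auto simp: settings_def PiE_def Pi_def)
    have "(\<lambda>l. l n) \<in> hidden_space N S Lam \<rightarrow>\<^sub>M PiM {..<S n} (Lam n)"
      unfolding hidden_space_def using n by (intro measurable_component_singleton) auto
    moreover have "(\<lambda>x. x (s n)) \<in> PiM {..<S n} (Lam n) \<rightarrow>\<^sub>M Lam n (s n)"
      using sn by (intro measurable_component_singleton) auto
    ultimately show ?thesis by (rule measurable_compose)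
  qed
  then show ?thesis unfolding obs_def joint_space_def
    by (intro measurable_restrict) auto
qed

lemma lin_fun_meas:
  fixes \<gamma> :: "(nat \<Rightarrow> nat) \<Rightarrow> nat \<Rightarrow> real"
  assumes D: "\<forall>s\<in>settings N S. \<forall>q<Q s. D s q \<in> sets (joint_space N Lam s)"
  shows "lin_fun N S Q \<gamma> D \<in> borel_measurable (hidden_space N S Lam)"
  unfolding lin_fun_def
proof (intro borel_measurable_sum borel_measurable_times borel_measurable_const)
  fix s q assume s: "s \<in> settings N S" and q: "q \<in> {..<Q s}"
  have "(indicator (D s q) :: _ \<Rightarrow> real) \<in> borel_measurable (joint_space N Lam s)"
    using D s q by (intro borel_measurable_indicator) auto
  then show "(\<lambda>x. indicator (D s q) (obs N s x) :: real) \<in> borel_measurable (hidden_space N S Lam)"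
    using obs_meas[OF s] by (rule measurable_compose[rotated])
qed

lemma lin_fun_bound:
  fixes \<gamma> :: "(nat \<Rightarrow> nat) \<Rightarrow> nat \<Rightarrow> real"
  shows   "\<bar>lin_fun N S Q \<gamma> D l\<bar> \<le> (\<Sum>s\<in>settings N S. \<Sum>q<Q s. \<bar>\<gamma> s q\<bar>)"
  unfolding lin_fun_def
proof -
  have "\<bar>\<Sum>s\<in>settings N S. \<Sum>q<Q s. \<gamma> s q * indicator (D s q) (obs N s l)\<bar>
     \<le> (\<Sum>s\<in>settings N S. \<bar>\<Sum>q<Q s. \<gamma> s q * indicator (D s q) (obs N s l)\<bar>)"
    by (rule sum_abs[of "\<lambda>s. \<Sum>q<Q s. \<gamma> s q * indicator (D s q) (obs N s l)"])
  also have "\<dots> \<le> (\<Sum>s\<in>settings N S. \<Sum>q<Q s. \<bar>\<gamma> s q * indicator (D s q) (obs N s l)\<bar>)"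
    by (intro sum_mono sum_abs)
  also have "\<dots> \<le> (\<Sum>s\<in>settings N S. \<Sum>q<Q s. \<bar>\<gamma> s q\<bar>)"
    by (intro sum_mono) (auto simp: abs_mult indicator_def)
  finally show "\<bar>\<Sum>s\<in>settings N S. \<Sum>q<Q s. \<gamma> s q * indicator (D s q) (obs N s l)\<bar>
     \<le> (\<Sum>s\<in>settings N S. \<Sum>q<Q s. \<bar>\<gamma> s q\<bar>)" .
qed

lemma lin_value_integral:
  fixes \<gamma> :: "(nat \<Rightarrow> nat) \<Rightarrow> nat \<Rightarrow> real"
  assumes mu: "prob_space \<mu>" "sets \<mu> = sets (hidden_space N S Lam)"
    and P: "\<forall>s\<in>settings N S. P s = distr \<mu> (joint_space N Lam s) (obs N s)"
    and D: "\<forall>s\<in>settings N S. \<forall>q<Q s. D s q \<in> sets (joint_space N Lam s)"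
  shows "lin_value N S Q \<gamma> D P = integral\<^sup>L \<mu> (lin_fun N S Q \<gamma> D)"
proof -
  interpret prob_space \<mu> by fact
  have ob: "obs N s \<in> \<mu> \<rightarrow>\<^sub>M joint_space N Lam s" if "s \<in> settings N S" for s
    using obs_meas[OF that] measurable_cong_sets[OF mu(2) refl] by blast
  have int: "integrable \<mu> (\<lambda>l. indicator (D s q) (obs N s l) :: real)"
    if s: "s \<in> settings N S" and q: "q < Q s" for s q
  proof -
    have "(\<lambda>l. indicator (D s q) (obs N s l) :: real) \<in> borel_measurable \<mu>"
      using ob[OF s] D s q by (intro measurable_compose[OF _ borel_measurable_indicator]) auto
    then show ?thesis
      by (intro integrable_const_bound[where B=1]) (auto simp: indicator_def)
  qed
  have eq: "measure (P s) (D s q) = integral\<^sup>L \<mu> (\<lambda>l. indicator (D s q) (obs N s l))"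
    if s: "s \<in> settings N S" and q: "q < Q s" for s q
  proof -
    interpret P: prob_space "distr \<mu> (joint_space N Lam s) (obs N s)"
      using ob[OF s] by (rule prob_space_distr)
    have "measure (P s) (D s q) = integral\<^sup>L (distr \<mu> (joint_space N Lam s) (obs N s)) (indicator (D s q))"
    proof -
      have Ps: "P s = distr \<mu> (joint_space N Lam s) (obs N s)" using P s by auto
      have Dm: "D s q \<in> sets (distr \<mu> (joint_space N Lam s) (obs N s))" using D s q by simp
      show ?thesis unfolding Ps using Dm by (simp add: integral_indicator P.emeasure_finite)
    qed
    also have "\<dots> = integral\<^sup>L \<mu> (\<lambda>l. indicator (D s q) (obs N s l))"
      using ob[OF s] D s q by (intro integral_distr borel_measurable_indicator) auto
    finally show ?thesis .
  qed
  have "lin_value N S Q \<gamma> D P =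
     (\<Sum>s\<in>settings N S. \<Sum>q<Q s. \<gamma> s q * integral\<^sup>L \<mu> (\<lambda>l. indicator (D s q) (obs N s l)))"
    unfolding lin_value_def using eq by (intro sum.cong refl) auto
  also have "\<dots> = (\<Sum>s\<in>settings N S. \<Sum>q<Q s. integral\<^sup>L \<mu> (\<lambda>l. \<gamma> s q * indicator (D s q) (obs N s l)))"
    by simp
  also have "\<dots> = (\<Sum>s\<in>settings N S. integral\<^sup>L \<mu> (\<lambda>l. \<Sum>q<Q s. \<gamma> s q * indicator (D s q) (obs N s l)))"
  proof (intro sum.cong refl)
    fix s assume s: "s \<in> settings N S"
    show "(\<Sum>q<Q s. integral\<^sup>L \<mu> (\<lambda>l. \<gamma> s q * indicator (D s q) (obs N s l))) =
      integral\<^sup>L \<mu> (\<lambda>l. \<Sum>q<Q s. \<gamma> s q * indicator (D s q) (obs N s l))"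
      by (rule Bochner_Integration.integral_sum[where I="{..<Q s}" and M=\<mu> and f="\<lambda>q l. \<gamma> s q * indicator (D s q) (obs N s l)", symmetric])
        (auto intro: integrable_mult_right int s)
  qed
  also have "\<dots> = integral\<^sup>L \<mu> (lin_fun N S Q \<gamma> D)"
    unfolding lin_fun_def
    by (rule Bochner_Integration.integral_sum[where I="settings N S" and M=\<mu> and f="\<lambda>s l. \<Sum>q<Q s. \<gamma> s q * indicator (D s q) (obs N s l)", symmetric])
      (rule Bochner_Integration.integrable_sum[where I="{..<Q s}" and M=\<mu> and f="\<lambda>q l. \<gamma> s q * indicator (D s q) (obs N s l)" for s];
       auto intro: integrable_mult_right int)
  finally show ?thesis .
qed

lemma value_bounds:
  fixes \<gamma> :: "(nat \<Rightarrow> nat) \<Rightarrow> nat \<Rightarrow> real"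
  assumes A: "admits_LHV N S Lam P"
    and D: "\<forall>s\<in>settings N S. \<forall>q<Q s. D s q \<in> sets (joint_space N Lam s)"
  shows "space (hidden_space N S Lam) \<noteq> {}"
    and "(INF l\<in>space (hidden_space N S Lam). lin_fun N S Q \<gamma> D l) \<le> lin_value N S Q \<gamma> D P"
    and "lin_value N S Q \<gamma> D P \<le> (SUP l\<in>space (hidden_space N S Lam). lin_fun N S Q \<gamma> D l)"
proof -
  let ?H = "hidden_space N S Lam"
  let ?f = "lin_fun N S Q \<gamma> D"
  let ?B = "(\<Sum>s\<in>settings N S. \<Sum>q<Q s. \<bar>\<gamma> s q\<bar>)"
  obtain \<mu> where mu: "prob_space \<mu>" "sets \<mu> = sets ?H"
    and P: "\<forall>s\<in>settings N S. P s = distr \<mu> (joint_space N Lam s) (obs N s)"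
    using A unfolding admits_LHV_def by blast
  interpret prob_space \<mu> by fact
  have sp: "space \<mu> = space ?H" using mu(2) by (rule sets_eq_imp_space_eq)
  show ne: "space ?H \<noteq> {}" using not_empty sp by simp
  have val: "lin_value N S Q \<gamma> D P = integral\<^sup>L \<mu> ?f"
    by (rule lin_value_integral[OF mu P D])
  have fm: "?f \<in> borel_measurable \<mu>"
    using lin_fun_meas[OF D] measurable_cong_sets[OF mu(2) refl] by blast
  have fi: "integrable \<mu> ?f"
    by (rule integrable_const_bound[where B="?B"]) (auto simp: lin_fun_bound fm)
  have bd: "- ?B \<le> ?f l \<and> ?f l \<le> ?B" for l
    using lin_fun_bound[of N S Q \<gamma> D l] by (simp add: abs_le_iff)
  have bb: "bdd_below (?f ` space ?H)" "bdd_above (?f ` space ?H)"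
    unfolding bdd_below_def bdd_above_def using bd by blast+
  have "(INF l\<in>space ?H. ?f l) = integral\<^sup>L \<mu> (\<lambda>_. (INF l\<in>space ?H. ?f l))"
    by (simp add: prob_space)
  also have "\<dots> \<le> integral\<^sup>L \<mu> ?f"
    by (rule integral_mono) (auto simp: fi sp intro!: cINF_lower bb)
  finally show "(INF l\<in>space ?H. ?f l) \<le> lin_value N S Q \<gamma> D P" using val by simp
  have "integral\<^sup>L \<mu> ?f \<le> integral\<^sup>L \<mu> (\<lambda>_. (SUP l\<in>space ?H. ?f l))"
    by (rule integral_mono) (auto simp: fi sp intro!: cSUP_upper bb)
  also have "\<dots> = (SUP l\<in>space ?H. ?f l)"
    by (simp add: prob_space)
  finally show "lin_value N S Q \<gamma> D P \<le> (SUP l\<in>space ?H. ?f l)" using val by simp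
qed

lemma point_value:
  fixes \<gamma> :: "(nat \<Rightarrow> nat) \<Rightarrow> nat \<Rightarrow> real"
  assumes l: "l \<in> space (hidden_space N S Lam)"
    and D: "\<forall>s\<in>settings N S. \<forall>q<Q s. D s q \<in> sets (joint_space N Lam s)"
  shows "\<exists>P'. admits_LHV N S Lam P' \<and> lin_value N S Q \<gamma> D P' = lin_fun N S Q \<gamma> D l"
proof -
  let ?H = "hidden_space N S Lam"
  let ?\<mu> = "return ?H l"
  define P' where "P' = (\<lambda>s. distr ?\<mu> (joint_space N Lam s) (obs N s))"
  have pr: "prob_space ?\<mu>" using l by (rule prob_space_return)
  have ob: "obs N s \<in> ?\<mu> \<rightarrow>\<^sub>M joint_space N Lam s" if "s \<in> settings N S" for s
    using obs_meas[OF that] by simp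
  have "admits_LHV N S Lam P'"
    unfolding admits_LHV_def corr_experiment_def
  proof (intro conjI ballI exI[of _ ?\<mu>])
    fix s assume s: "s \<in> settings N S"
    show "prob_space (P' s)" unfolding P'_def by (rule prob_space.prob_space_distr[OF pr ob[OF s]])
    show "sets (P' s) = sets (joint_space N Lam s)" unfolding P'_def by simp
    show "P' s = distr ?\<mu> (joint_space N Lam s) (obs N s)" unfolding P'_def ..
  qed (auto simp: pr)
  moreover have "lin_value N S Q \<gamma> D P' = lin_fun N S Q \<gamma> D l"
  proof -
    have "lin_value N S Q \<gamma> D P' = integral\<^sup>L ?\<mu> (lin_fun N S Q \<gamma> D)"
      by (rule lin_value_integral[OF pr _ _ D]) (auto simp: P'_def)
    also have "\<dots> = lin_fun N S Q \<gamma> D l"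
      by (rule integral_return[OF l lin_fun_meas[OF D]])
    finally show ?thesis .
  qed
  ultimately show ?thesis by blast
qed

theorem corollary4:
  fixes N :: nat and S :: "nat \<Rightarrow> nat" and Lam :: "nat \<Rightarrow> nat \<Rightarrow> 'a measure"
    and P :: "(nat \<Rightarrow> nat) \<Rightarrow> (nat \<Rightarrow> 'a) measure"
    and Q :: "(nat \<Rightarrow> nat) \<Rightarrow> nat" and \<gamma> :: "(nat \<Rightarrow> nat) \<Rightarrow> nat \<Rightarrow> real"
    and D :: "(nat \<Rightarrow> nat) \<Rightarrow> nat \<Rightarrow> (nat \<Rightarrow> 'a) set"
  assumes "N \<ge> 1"
    and "\<forall>n<N. S n \<ge> 1"
    and "admits_LHV N S Lam P"
    and "\<forall>s\<in>settings N S. \<forall>q<Q s. D s q \<in> sets (joint_space N Lam s)"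
  shows "(INF l\<in>space (hidden_space N S Lam). lin_fun N S Q \<gamma> D l) \<le> lin_value N S Q \<gamma> D P
       \<and> lin_value N S Q \<gamma> D P \<le> (SUP l\<in>space (hidden_space N S Lam). lin_fun N S Q \<gamma> D l)
       \<and> (INF l\<in>space (hidden_space N S Lam). lin_fun N S Q \<gamma> D l)
           = Inf {lin_value N S Q \<gamma> D P' | P'. admits_LHV N S Lam P'}
       \<and> (SUP l\<in>space (hidden_space N S Lam). lin_fun N S Q \<gamma> D l)
           = Sup {lin_value N S Q \<gamma> D P' | P'. admits_LHV N S Lam P'}"
proof -
  let ?H = "hidden_space N S Lam"
  let ?f = "lin_fun N S Q \<gamma> D"
  let ?V = "{lin_value N S Q \<gamma> D P' | P'. admits_LHV N S Lam P'}"
  note vb = value_bounds[OF assms(3) assms(4)]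
  have ne: "space ?H \<noteq> {}" by (rule vb(1))
  have Vne: "?V \<noteq> {}" using assms(3) by blast
  have low: "\<forall>v\<in>?V. (INF l\<in>space ?H. ?f l) \<le> v \<and> v \<le> (SUP l\<in>space ?H. ?f l)"
    using value_bounds(2,3)[OF _ assms(4)] by blast
  have pts: "?f l \<in> ?V" if "l \<in> space ?H" for l
    using point_value[OF that assms(4), where \<gamma>=\<gamma>] by (simp add: eq_commute) blast
  have "Inf ?V = (INF l\<in>space ?H. ?f l)"
  proof (rule antisym)
    show "Inf ?V \<le> (INF l\<in>space ?H. ?f l)"
    proof (rule cINF_greatest[OF ne])
      fix l assume "l \<in> space ?H"
      then show "Inf ?V \<le> ?f l"
        by (intro cInf_lower pts) (use low in \<open>auto simp: bdd_below_def\<close>)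
    qed
    show "(INF l\<in>space ?H. ?f l) \<le> Inf ?V"
      by (rule cInf_greatest[OF Vne]) (use low in auto)
  qed
  moreover have "Sup ?V = (SUP l\<in>space ?H. ?f l)"
  proof (rule antisym)
    show "(SUP l\<in>space ?H. ?f l) \<le> Sup ?V"
    proof (rule cSUP_least[OF ne])
      fix l assume "l \<in> space ?H"
      then show "?f l \<le> Sup ?V"
        by (intro cSup_upper pts) (use low in \<open>auto simp: bdd_above_def\<close>)
    qed
    show "Sup ?V \<le> (SUP l\<in>space ?H. ?f l)"
      by (rule cSup_least[OF Vne]) (use low in auto)
  qed
  ultimately show ?thesis using vb(2,3) by simp
qed

end
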